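(* Maximal matching can be solved by a deterministic LOCAL algorithm in $O(\log n/\log\log n)$ rounds on $n$-node trees.
   Context: A maximal matching of a graph is a set of pairwise non-adjacent edges such that every edge of the graph shares an endpoint with some edge of the set. LOCAL model: nodes have unique IDs from $\{1,\dots,n^c\}$, know $n$, have unbounded computation, and communicate with neighbors in synchronous rounds with unbounded messages. *)

theory Defs
  imports Main "HOL-Library.Multiset" "HOL-Library.Landau_Symbols"
begin

definition simple_graph :: "nat set \<Rightarrow> (nat \<Rightarrow> nat \<Rightarrow> bool) \<Rightarrow> bool" where
  "simple_graph V E \<longleftrightarrow> finite V \<and>
     (\<forall>u v. E u v \<longrightarrow> u \<in> V \<and> v \<in> V \<and> u \<noteq> v \<and> E v u)"

definition graph_connected :: "nat set \<Rightarrow> (nat \<Rightarrow> nat \<Rightarrow> bool) \<Rightarrow> bool" where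
  "graph_connected V E \<longleftrightarrow> (\<forall>u\<in>V. \<forall>v\<in>V. E\<^sup>*\<^sup>* u v)"

definition graph_acyclic :: "nat set \<Rightarrow> (nat \<Rightarrow> nat \<Rightarrow> bool) \<Rightarrow> bool" where
  "graph_acyclic V E \<longleftrightarrow> \<not> (\<exists>cyc. length cyc \<ge> 3 \<and> distinct cyc \<and> set cyc \<subseteq> V \<and>
       (\<forall>i. i + 1 < length cyc \<longrightarrow> E (cyc ! i) (cyc ! (i + 1))) \<and> E (last cyc) (hd cyc))"

definition is_tree :: "nat set \<Rightarrow> (nat \<Rightarrow> nat \<Rightarrow> bool) \<Rightarrow> bool" where
  "is_tree V E \<longleftrightarrow> simple_graph V E \<and> V \<noteq> {} \<and> graph_connected V E \<and> graph_acyclic V E"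

definition graph_edges :: "(nat \<Rightarrow> nat \<Rightarrow> bool) \<Rightarrow> nat set set" where
  "graph_edges E = {{u, v} | u v. E u v}"

definition is_matching :: "(nat \<Rightarrow> nat \<Rightarrow> bool) \<Rightarrow> nat set set \<Rightarrow> bool" where
  "is_matching E M \<longleftrightarrow> M \<subseteq> graph_edges E \<and> (\<forall>e\<in>M. \<forall>e'\<in>M. e \<noteq> e' \<longrightarrow> e \<inter> e' = {})"

definition is_maximal_matching :: "(nat \<Rightarrow> nat \<Rightarrow> bool) \<Rightarrow> nat set set \<Rightarrow> bool" where
  "is_maximal_matching E M \<longleftrightarrow> is_matching E M \<and>
     (\<forall>e\<in>graph_edges E. \<exists>e'\<in>M. e \<inter> e' \<noteq> {})"

definition valid_ids :: "nat \<Rightarrow> nat set \<Rightarrow> (nat \<Rightarrow> nat) \<Rightarrow> bool" where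
  "valid_ids c V ident \<longleftrightarrow> inj_on ident V \<and> ident ` V \<subseteq> {1 .. card V ^ c}"

text \<open>Deterministic LOCAL algorithm (full-information form, unbounded messages and
  computation): every node knows n and its ID; its state is a natural number
  (an arbitrary encoding chosen by the algorithm). In every round each node sends its
  whole state to all neighbours and updates its state from its own state and the
  multiset of received messages.  After the last round each node outputs either
  None (unmatched) or Some i, i the ID of its matched partner.\<close>

primrec local_state ::
  "(nat \<Rightarrow> nat \<Rightarrow> nat) \<Rightarrow> (nat \<Rightarrow> nat \<Rightarrow> nat \<Rightarrow> nat multiset \<Rightarrow> nat) \<Rightarrow>
   nat set \<Rightarrow> (nat \<Rightarrow> nat \<Rightarrow> bool) \<Rightarrow> (nat \<Rightarrow> nat) \<Rightarrow> nat \<Rightarrow> nat \<Rightarrow> nat" where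
  "local_state init step V E ident 0 v = init (card V) (ident v)"
| "local_state init step V E ident (Suc t) v =
     step (card V) t (local_state init step V E ident t v)
       (image_mset (local_state init step V E ident t) (mset_set {u \<in> V. E v u}))"

definition solves_maximal_matching ::
  "nat set \<Rightarrow> (nat \<Rightarrow> nat \<Rightarrow> bool) \<Rightarrow> (nat \<Rightarrow> nat) \<Rightarrow> (nat \<Rightarrow> nat option) \<Rightarrow> bool" where
  "solves_maximal_matching V E ident outp \<longleftrightarrow>
     (\<forall>v\<in>V. outp v = None \<or>
        (\<exists>u. E v u \<and> outp v = Some (ident u) \<and> outp u = Some (ident v))) \<and>
     is_maximal_matching E {{u, v} | u v. E u v \<and> outp u = Some (ident v)}"

end

theory Submission
  imports Defs "HOL-Library.Countable" "HOL-Library.Discrete_Functions" "HOL-Real_Asymp.Real_Asymp"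
begin

datatype st = St (sid: nat) (slay: "nat option") (souts: "nat list") (sc1: "nat list")
  (sc2: "nat list") (sprop: "nat option") (spart: "nat option")

instance st :: countable by countable_datatype

primrec lsg ::
  "(nat \<Rightarrow> nat \<Rightarrow> 'a) \<Rightarrow> (nat \<Rightarrow> nat \<Rightarrow> 'a \<Rightarrow> 'a multiset \<Rightarrow> 'a) \<Rightarrow>
   nat set \<Rightarrow> (nat \<Rightarrow> nat \<Rightarrow> bool) \<Rightarrow> (nat \<Rightarrow> nat) \<Rightarrow> nat \<Rightarrow> nat \<Rightarrow> 'a" where
  "lsg init step V E ident 0 v = init (card V) (ident v)"
| "lsg init step V E ident (Suc t) v =
     step (card V) t (lsg init step V E ident t v)
       (image_mset (lsg init step V E ident t) (mset_set {u \<in> V. E v u}))"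

lemma sim:
  fixes init :: "nat \<Rightarrow> nat \<Rightarrow> 'a::countable"
  shows "local_state (\<lambda>n x. to_nat (init n x))
     (\<lambda>n t s M. to_nat (step n t (from_nat s) (image_mset from_nat M))) V E ident t v
   = to_nat (lsg init step V E ident t v)"
proof (induction t arbitrary: v)
  case 0 then show ?case by simp
next
  case (Suc t)
  have "image_mset from_nat (image_mset (local_state (\<lambda>n x. to_nat (init n x))
     (\<lambda>n t s M. to_nat (step n t (from_nat s) (image_mset from_nat M))) V E ident t) N)
     = image_mset (lsg init step V E ident t) N" for N
    by (simp add: multiset.map_comp comp_def Suc)
  then show ?case by (simp add: Suc)
qed

lemma size_filter_image_mset_set:
  "finite A \<Longrightarrow> size (filter_mset P (image_mset f (mset_set A))) = card {x\<in>A. P (f x)}"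
  by (simp add: filter_mset_image_mset)

lemma set_image_mset_set: "finite A \<Longrightarrow> set_mset (image_mset f (mset_set A)) = f ` A"
  by simp

definition bt :: "nat \<Rightarrow> nat \<Rightarrow> bool" where "bt x k = odd (x div 2^k)"

definition cv :: "nat \<Rightarrow> nat \<Rightarrow> nat" where
  "cv x y = (let k = (LEAST k. bt x k \<noteq> bt y k) in 2 * k + (if bt x k then 1 else 0))"

lemma bt_ex: "x \<noteq> y \<Longrightarrow> \<exists>k. bt x k \<noteq> bt y k"
  using bit_eq_iff[of x y] by (auto simp: bt_def bit_iff_odd)

lemma cv_proper: assumes "x \<noteq> y" "y \<noteq> z" shows "cv x y \<noteq> cv y z"
proof
  assume h: "cv x y = cv y z"
  define k1 where "k1 = (LEAST k. bt x k \<noteq> bt y k)"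
  define k2 where "k2 = (LEAST k. bt y k \<noteq> bt z k)"
  have d1: "bt x k1 \<noteq> bt y k1" unfolding k1_def by (rule LeastI_ex, rule bt_ex[OF assms(1)])
  have "2 * k1 + (if bt x k1 then 1 else 0) = 2 * k2 + (if bt y k2 then 1 else 0)"
    using h unfolding cv_def k1_def k2_def Let_def by simp
  hence "k1 = k2" "bt x k1 = bt y k2" by (auto split: if_splits) presburger+
  with d1 show False by simp
qed

lemma cv_root: assumes "x \<noteq> y" shows "cv x y \<noteq> y mod 2"
proof
  assume h: "cv x y = y mod 2"
  define k1 where "k1 = (LEAST k. bt x k \<noteq> bt y k)"
  have d1: "bt x k1 \<noteq> bt y k1" unfolding k1_def by (rule LeastI_ex, rule bt_ex[OF assms(1)])
  have e0: "2 * k1 + (if bt x k1 then 1 else 0) = y mod 2"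
    using h unfolding cv_def k1_def Let_def by simp
  moreover have "y mod 2 \<le> 1" by simp
  ultimately have k0: "k1 = 0" by (auto split: if_splits)
  with e0 have "(if bt x 0 then 1 else 0) = y mod 2" by simp
  hence "bt x 0 = bt y 0" by (auto simp: bt_def split: if_splits)
  with d1 k0 show False by simp
qed

lemma bt_big: "x < 2^B \<Longrightarrow> B \<le> k \<Longrightarrow> \<not> bt x k"
proof -
  assume "x < 2^B" "B \<le> k"
  hence "x < 2^k" by (meson order_less_le_trans one_le_numeral power_increasing)
  thus ?thesis by (simp add: bt_def)
qed

lemma cv_bound: assumes "x \<noteq> y" "x < 2^B" "y < 2^B" shows "cv x y < 2 * B"
proof -
  define k1 where "k1 = (LEAST k. bt x k \<noteq> bt y k)"
  have d1: "bt x k1 \<noteq> bt y k1" unfolding k1_def by (rule LeastI_ex, rule bt_ex[OF assms(1)])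
  have "k1 < B" using d1 bt_big[OF assms(2)] bt_big[OF assms(3)] by (meson not_le)
  thus ?thesis unfolding cv_def k1_def[symmetric] Let_def by simp
qed

definition degA :: "(nat \<Rightarrow> nat \<Rightarrow> bool) \<Rightarrow> nat set \<Rightarrow> nat \<Rightarrow> nat" where
  "degA E A v = card {u\<in>A. E v u}"

definition pathsA :: "(nat \<Rightarrow> nat \<Rightarrow> bool) \<Rightarrow> nat set \<Rightarrow> nat list set" where
  "pathsA E A = {xs. xs \<noteq> [] \<and> distinct xs \<and> set xs \<subseteq> A \<and> (\<forall>i. i + 1 < length xs \<longrightarrow> E (xs!i) (xs!(i+1)))}"

lemma two_elems: assumes "finite S" "card S \<ge> 2" shows "\<exists>u\<in>S. u \<noteq> y"
proof (rule ccontr)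
  assume "\<not> ?thesis" hence "S \<subseteq> {y}" by auto
  hence "card S \<le> 1" using card_mono[of "{y}" S] by simp
  with assms show False by simp
qed

lemma leaf_exists:
  assumes sg: "simple_graph V E" and ac: "graph_acyclic V E"
    and A: "A \<subseteq> V" "A \<noteq> {}"
  shows "\<exists>w\<in>A. degA E A w \<le> 1"
proof (rule ccontr)
  assume "\<not> ?thesis"
  hence deg2: "\<And>w. w \<in> A \<Longrightarrow> card {u\<in>A. E w u} \<ge> 2" by (force simp: degA_def)
  have finA: "finite A" using sg A unfolding simple_graph_def using finite_subset by blast
  have irr: "\<And>u v. E u v \<Longrightarrow> u \<noteq> v" using sg unfolding simple_graph_def by blast
  have "pathsA E A \<subseteq> {xs. set xs \<subseteq> A \<and> length xs \<le> card A}"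
  proof
    fix xs assume "xs \<in> pathsA E A"
    hence "distinct xs" "set xs \<subseteq> A" unfolding pathsA_def by auto
    hence "length xs \<le> card A" using distinct_card[of xs] card_mono[OF finA] by metis
    thus "xs \<in> {xs. set xs \<subseteq> A \<and> length xs \<le> card A}" using \<open>set xs \<subseteq> A\<close> by simp
  qed
  hence finP: "finite (pathsA E A)" using finite_lists_length_le[OF finA] finite_subset by blast
  obtain a where "a \<in> A" using A by blast
  hence "[a] \<in> pathsA E A" unfolding pathsA_def by simp
  hence neP: "pathsA E A \<noteq> {}" by blast
  define m where "m = Max (length ` pathsA E A)"
  have "m \<in> length ` pathsA E A" unfolding m_def using finP neP by simp
  then obtain xs where xsP: "xs \<in> pathsA E A" and lxs: "length xs = m" by blast
  have maxm: "\<And>ys. ys \<in> pathsA E A \<Longrightarrow> length ys \<le> m" unfolding m_def using finP by simp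
  have xs1: "xs \<noteq> []" "distinct xs" "set xs \<subseteq> A" "\<And>i. i + 1 < length xs \<Longrightarrow> E (xs!i) (xs!(i+1))"
    using xsP unfolding pathsA_def by auto
  define z where "z = last xs"
  have zA: "z \<in> A" using xs1 unfolding z_def by auto
  have zl: "z = xs ! (length xs - 1)" unfolding z_def using xs1(1) by (simp add: last_conv_nth)
  obtain u where uA: "u \<in> A" and Ezu: "E z u" and u2: "length xs \<ge> 2 \<Longrightarrow> u \<noteq> xs ! (length xs - 2)"
  proof (cases "length xs \<ge> 2")
    case True
    from two_elems[OF _ deg2[OF zA], of "xs ! (length xs - 2)"] finA
    obtain u where "u \<in> {u\<in>A. E z u}" "u \<noteq> xs ! (length xs - 2)" by auto
    then show ?thesis using that by auto
  next
    case False
    from two_elems[OF _ deg2[OF zA], of z] finA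
    obtain u where "u \<in> {u\<in>A. E z u}" by auto
    then show ?thesis using that False by auto
  qed
  show False
  proof (cases "u \<in> set xs")
    case False
    have "xs @ [u] \<in> pathsA E A"
      unfolding pathsA_def
    proof (intro CollectI conjI allI impI)
      fix i assume "i + 1 < length (xs @ [u])"
      show "E ((xs @ [u]) ! i) ((xs @ [u]) ! (i + 1))"
      proof (cases "i + 1 < length xs")
        case True then show ?thesis using xs1(4)[OF True] by (simp add: nth_append)
      next
        case False
        hence "i = length xs - 1" using \<open>i + 1 < length (xs @ [u])\<close> by simp
        then show ?thesis using Ezu zl xs1(1) by (simp add: nth_append)
      qed
    qed (use xs1 False uA in auto)
    with maxm lxs show False by fastforce
  next
    case True
    then obtain k where k: "k < length xs" "xs ! k = u" by (auto simp: in_set_conv_nth)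
    have "k \<noteq> length xs - 1" using irr[OF Ezu] zl k by auto
    moreover have "length xs \<ge> 2 \<Longrightarrow> k \<noteq> length xs - 2" using u2 k by auto
    ultimately have k3: "k + 3 \<le> length xs" using k(1) 
      by (cases "length xs \<ge> 2") auto
    define cyc where "cyc = drop k xs"
    have "length cyc \<ge> 3" "distinct cyc" "set cyc \<subseteq> V"
      using k3 xs1 A set_drop_subset[of k xs] unfolding cyc_def by auto
    moreover have "\<forall>i. i + 1 < length cyc \<longrightarrow> E (cyc ! i) (cyc ! (i + 1))"
      using xs1(4) unfolding cyc_def by (simp add: add.assoc)
    moreover have "E (last cyc) (hd cyc)"
      using Ezu k k3 unfolding cyc_def z_def by (simp add: hd_drop_conv_nth)
    ultimately show False using ac unfolding graph_acyclic_def by blast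
  qed
qed

lemma degA_remove:
  assumes "v \<in> A" "w \<noteq> v" "finite A"
  shows "degA E A v = degA E (A - {w}) v + (if E v w \<and> w \<in> A then 1 else 0)"
proof -
  have "{u\<in>A. E v u} = {u\<in>A - {w}. E v u} \<union> (if E v w \<and> w \<in> A then {w} else {})" by auto
  moreover have "finite {u\<in>A - {w}. E v u}" using assms by simp
  ultimately show ?thesis unfolding degA_def by (auto simp: card_insert_if)
qed

lemma degsum:
  assumes sg: "simple_graph V E" and ac: "graph_acyclic V E"
  shows "A \<subseteq> V \<Longrightarrow> A \<noteq> {} \<Longrightarrow> sum (degA E A) A + 2 \<le> 2 * card A"
proof (induction "card A" arbitrary: A)
  case 0
  have "finite A" using sg 0 unfolding simple_graph_def using finite_subset by blast
  with 0 show ?case by simp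
next
  case (Suc m)
  have finA: "finite A" using sg Suc unfolding simple_graph_def using finite_subset by blast
  have irr: "\<And>u v. E u v \<Longrightarrow> u \<noteq> v" using sg unfolding simple_graph_def by blast
  have sym: "\<And>u v. E u v \<Longrightarrow> E v u" using sg unfolding simple_graph_def by blast
  obtain w where wA: "w \<in> A" and dw: "degA E A w \<le> 1" using leaf_exists[OF sg ac Suc(3,4)] by blast
  define A' where "A' = A - {w}"
  have sumsplit: "sum (degA E A) A = degA E A w + sum (degA E A) A'"
    unfolding A'_def using finA wA by (simp add: sum.remove)
  have "sum (degA E A) A' = sum (\<lambda>v. degA E A' v + (if E v w then 1 else 0)) A'"
  proof (rule sum.cong)
    fix v assume "v \<in> A'"
    then show "degA E A v = degA E A' v + (if E v w then 1 else 0)"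
      using degA_remove[of v A w E] finA wA unfolding A'_def by auto
  qed simp
  also have "\<dots> = sum (degA E A') A' + card {v\<in>A'. E v w}"
    using finA unfolding A'_def by (simp add: sum.distrib sum.If_cases Int_def)
  also have "{v\<in>A'. E v w} = {u\<in>A. E w u}" unfolding A'_def using irr sym by blast
  finally have eq: "sum (degA E A) A = sum (degA E A') A' + 2 * degA E A w"
    using sumsplit unfolding degA_def by simp
  show ?case
  proof (cases "A' = {}")
    case True
    hence "A = {w}" using wA unfolding A'_def by auto
    hence "degA E A w = 0" unfolding degA_def using irr by auto
    with eq True \<open>A = {w}\<close> show ?thesis by simp
  next
    case False
    have cA': "m = card A'" unfolding A'_def using Suc(2) finA wA by simp
    have "sum (degA E A') A' + 2 \<le> 2 * card A'"
      using Suc(1)[OF cA'] False Suc(3) unfolding A'_def by auto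
    moreover have "card A = card A' + 1" using cA' Suc(2) by simp
    ultimately show ?thesis using eq dw by simp
  qed
qed

lemma few_high:
  assumes sg: "simple_graph V E" and ac: "graph_acyclic V E" and "A \<subseteq> V"
  shows "card {v\<in>A. degA E A v > d} * (d + 1) \<le> 2 * card A"
proof (cases "A = {}")
  case True then show ?thesis by simp
next
  case False
  have finA: "finite A" using sg assms(3) unfolding simple_graph_def using finite_subset by blast
  have "card {v\<in>A. degA E A v > d} * (d + 1) = sum (\<lambda>v. d + 1) {v\<in>A. degA E A v > d}" by simp
  also have "\<dots> \<le> sum (degA E A) {v\<in>A. degA E A v > d}"
    by (rule sum_mono) auto
  also have "\<dots> \<le> sum (degA E A) A" by (rule sum_mono2[OF finA]) auto
  also have "\<dots> \<le> 2 * card A" using degsum[OF sg ac assms(3) False] by simp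
  finally show ?thesis .
qed

definition aP :: "nat \<Rightarrow> nat" where "aP n = max 1 (floor_log (floor_log n) div 2)"
definition dP :: "nat \<Rightarrow> nat" where "dP n = 2 ^ (aP n + 1)"
definition LP :: "nat \<Rightarrow> nat" where "LP n = floor_log n div aP n + 1"
definition B0 :: "nat \<Rightarrow> nat \<Rightarrow> nat" where "B0 c n = c * (floor_log n + 1)"
definition B1 :: "nat \<Rightarrow> nat \<Rightarrow> nat" where "B1 c n = floor_log (2 * B0 c n) + 1"
definition CP :: "nat \<Rightarrow> nat \<Rightarrow> nat" where "CP c n = 2 * B1 c n"
definition TP :: "nat \<Rightarrow> nat \<Rightarrow> nat" where "TP c n = LP n + 3 + 3 * (dP n * CP c n)"

definition look :: "st multiset \<Rightarrow> nat \<Rightarrow> st" where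
  "look M x = (SOME m. m \<in># M \<and> sid m = x)"

definition lexlt :: "nat \<Rightarrow> nat \<Rightarrow> nat \<Rightarrow> nat \<Rightarrow> bool" where
  "lexlt l1 x1 l2 x2 \<longleftrightarrow> l1 < l2 \<or> (l1 = l2 \<and> x1 < x2)"

definition initS :: "nat \<Rightarrow> nat \<Rightarrow> st" where
  "initS n x = St x None [] [] [] None None"

definition actv :: "nat \<Rightarrow> nat \<Rightarrow> nat \<Rightarrow> bool" where
  "actv c n t \<longleftrightarrow> LP n + 3 \<le> t \<and> t < TP c n"
definition phs :: "nat \<Rightarrow> nat \<Rightarrow> nat" where "phs n t = (t - (LP n + 3)) mod 3"
definition lbl :: "nat \<Rightarrow> nat \<Rightarrow> nat \<Rightarrow> nat" where "lbl c n t = ((t - (LP n + 3)) div 3) div CP c n"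
definition col :: "nat \<Rightarrow> nat \<Rightarrow> nat \<Rightarrow> nat" where "col c n t = ((t - (LP n + 3)) div 3) mod CP c n"

definition stepS :: "nat \<Rightarrow> nat \<Rightarrow> nat \<Rightarrow> st \<Rightarrow> st multiset \<Rightarrow> st" where
  "stepS c n t s M = St (sid s)
   (if t < LP n \<and> slay s = None \<and> size (filter_mset (\<lambda>m. slay m = None) M) \<le> dP n then Some t else slay s)
   (if t = LP n then sorted_list_of_set {sid m | m. m \<in># M \<and> lexlt (the (slay s)) (sid s) (the (slay m)) (sid m)}
    else souts s)
   (if t = LP n + 1 then map (\<lambda>i. if i < length (souts s) then cv (sid s) (souts s ! i) else sid s mod 2) [0..<dP n]
    else sc1 s)
   (if t = LP n + 2 then map (\<lambda>i. if i < length (souts s) then cv (sc1 s ! i) (sc1 (look M (souts s ! i)) ! i)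
      else sc1 s ! i mod 2) [0..<dP n]
    else sc2 s)
   (if actv c n t then
      (if phs n t = 0 then
         (if spart s = None \<and> lbl c n t < length (souts s) \<and> sc2 s ! lbl c n t = col c n t
             \<and> spart (look M (souts s ! lbl c n t)) = None
          then Some (souts s ! lbl c n t) else None)
       else if phs n t = 1 then sprop s else None)
    else sprop s)
   (if actv c n t \<and> phs n t = 1 \<and> spart s = None \<and> sprop s = None \<and> (\<exists>m\<in>#M. sprop m = Some (sid s))
    then Some (Min {sid m | m. m \<in># M \<and> sprop m = Some (sid s)})
    else if actv c n t \<and> phs n t = 2 \<and> spart s = None \<and> (\<exists>x. sprop s = Some x \<and> spart (look M x) = Some (sid s))
    then sprop s
    else spart s)"

lemma stepS_sel:
  "sid (stepS c n t s M) = sid s"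
  "slay (stepS c n t s M) = (if t < LP n \<and> slay s = None \<and> size (filter_mset (\<lambda>m. slay m = None) M) \<le> dP n then Some t else slay s)"
  "souts (stepS c n t s M) = (if t = LP n then sorted_list_of_set {sid m | m. m \<in># M \<and> lexlt (the (slay s)) (sid s) (the (slay m)) (sid m)}
    else souts s)"
  "sc1 (stepS c n t s M) = (if t = LP n + 1 then map (\<lambda>i. if i < length (souts s) then cv (sid s) (souts s ! i) else sid s mod 2) [0..<dP n]
    else sc1 s)"
  "sc2 (stepS c n t s M) = (if t = LP n + 2 then map (\<lambda>i. if i < length (souts s) then cv (sc1 s ! i) (sc1 (look M (souts s ! i)) ! i)
      else sc1 s ! i mod 2) [0..<dP n]
    else sc2 s)"
  "sprop (stepS c n t s M) = (if actv c n t then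
      (if phs n t = 0 then
         (if spart s = None \<and> lbl c n t < length (souts s) \<and> sc2 s ! lbl c n t = col c n t
             \<and> spart (look M (souts s ! lbl c n t)) = None
          then Some (souts s ! lbl c n t) else None)
       else if phs n t = 1 then sprop s else None)
    else sprop s)"
  "spart (stepS c n t s M) = (if actv c n t \<and> phs n t = 1 \<and> spart s = None \<and> sprop s = None \<and> (\<exists>m\<in>#M. sprop m = Some (sid s))
    then Some (Min {sid m | m. m \<in># M \<and> sprop m = Some (sid s)})
    else if actv c n t \<and> phs n t = 2 \<and> spart s = None \<and> (\<exists>x. sprop s = Some x \<and> spart (look M x) = Some (sid s))
    then sprop s
    else spart s)"
  by (simp_all add: stepS_def)

locale alg =
  fixes V :: "nat set" and E :: "nat \<Rightarrow> nat \<Rightarrow> bool" and ident :: "nat \<Rightarrow> nat" and c :: nat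
  assumes tree: "is_tree V E" and ids: "valid_ids c V ident" and c1: "c \<ge> 1"
begin

abbreviation "n \<equiv> card V"
abbreviation "S \<equiv> lsg initS (stepS c) V E ident"
definition "N v = {u\<in>V. E v u}"
abbreviation "msgs t v \<equiv> image_mset (S t) (mset_set (N v))"

lemma sg: "simple_graph V E" and ac: "graph_acyclic V E" and Vne: "V \<noteq> {}"
  using tree unfolding is_tree_def by auto
lemma finV: "finite V" using sg unfolding simple_graph_def by auto
lemma Ein: "E u v \<Longrightarrow> u \<in> V \<and> v \<in> V" using sg unfolding simple_graph_def by auto
lemma Esym: "E u v \<Longrightarrow> E v u" using sg unfolding simple_graph_def by auto
lemma Eirr: "E u v \<Longrightarrow> u \<noteq> v" using sg unfolding simple_graph_def by auto
lemma inj: "inj_on ident V" using ids unfolding valid_ids_def by auto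
lemma idrange: "v \<in> V \<Longrightarrow> ident v \<le> n ^ c" using ids unfolding valid_ids_def by auto
lemma finN: "finite (N v)" unfolding N_def using finV by simp
lemma npos: "n \<ge> 1" using finV Vne by (simp add: Suc_le_eq card_gt_0_iff)

lemma S_Suc: "S (Suc t) v = stepS c n t (S t v) (msgs t v)" by (simp add: N_def)

declare lsg.simps(2)[simp del]

lemma sid_S: "sid (S t v) = ident v"
  by (induction t) (simp add: initS_def, simp add: stepS_sel S_Suc)

lemma set_msgs: "set_mset (msgs t v) = S t ` N v" using finN by simp

lemma look_msgs: assumes "u \<in> N v" shows "look (msgs t v) (ident u) = S t u"
proof -
  have ex: "\<exists>m. m \<in># msgs t v \<and> sid m = ident u" using assms set_msgs sid_S by blast
  have "\<And>m. m \<in># msgs t v \<Longrightarrow> sid m = ident u \<Longrightarrow> m = S t u"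
  proof -
    fix m assume "m \<in># msgs t v" "sid m = ident u"
    then obtain w where "w \<in> N v" "m = S t w" using set_msgs by auto
    moreover have "ident w = ident u" using \<open>sid m = ident u\<close> \<open>m = S t w\<close> sid_S by simp
    ultimately show "m = S t u" using inj assms unfolding N_def inj_on_def by auto
  qed
  then show ?thesis unfolding look_def using someI_ex[OF ex] by blast
qed

lemma cnt_msgs: "size (filter_mset P (msgs t v)) = card {u\<in>N v. P (S t u)}"
  using finN by (simp add: filter_mset_image_mset)

primrec act :: "nat \<Rightarrow> nat set" where
  "act 0 = V"
| "act (Suc t) = {v\<in>act t. degA E (act t) v > dP n}"

lemma act_sub: "act t \<subseteq> V" by (induction t) auto
lemma act_Suc_sub: "act (Suc t) \<subseteq> act t" by auto
lemma act_anti: "r1 \<le> r2 \<Longrightarrow> act r2 \<subseteq> act r1"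
  by (induction r2 rule: dec_induct) (use act_Suc_sub in auto)

lemma aP_pos: "aP n \<ge> 1" unfolding aP_def by simp

lemma act_shrink: "card (act (Suc t)) * 2 ^ aP n \<le> card (act t)"
proof -
  have "card (act (Suc t)) * (dP n + 1) \<le> 2 * card (act t)"
    using few_high[OF sg ac act_sub[of t], of "dP n"] by (simp add: degA_def)
  hence "card (act (Suc t)) * (2 * 2 ^ aP n) \<le> 2 * card (act t)" unfolding dP_def
    by (metis (no_types, lifting) add_lessD1 le_trans less_imp_le_nat mult_le_mono2 power_Suc Suc_eq_plus1 le_add1)
  thus ?thesis by simp
qed

lemma act_card: "card (act t) * 2 ^ (aP n * t) \<le> n"
proof (induction t)
  case 0 then show ?case by simp
next
  case (Suc t)
  have "card (act (Suc t)) * 2 ^ (aP n * Suc t) = (card (act (Suc t)) * 2 ^ aP n) * 2 ^ (aP n * t)"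
    by (simp add: power_add algebra_simps)
  also have "\<dots> \<le> card (act t) * 2 ^ (aP n * t)" using act_shrink by simp
  finally show ?case using Suc by simp
qed

lemma LP_big: "n < 2 ^ (aP n * LP n)"
proof -
  define a where "a = aP n"
  define l where "l = floor_log n"
  have a1: "a \<ge> 1" unfolding a_def by (rule aP_pos)
  have "a * LP n = a * (l div a) + a" unfolding LP_def a_def l_def by simp
  moreover have "l < a * (l div a) + a" using a1
    by (metis add.commute div_mult_mod_eq mod_less_divisor nat_add_left_cancel_less order_less_le_trans zero_less_one le_refl add_le_mono mult.commute less_le_trans)
  ultimately have "l + 1 \<le> a * LP n" by simp
  hence "(2::nat) ^ (l + 1) \<le> 2 ^ (a * LP n)" by (rule power_increasing) simp
  moreover have "n < 2 ^ (l + 1)" using floor_log_exp2_gt[of n] unfolding l_def by simp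
  ultimately show ?thesis unfolding a_def by simp
qed

lemma act_L: "act (LP n) = {}"
proof -
  have "card (act (LP n)) * 2 ^ (aP n * LP n) < 1 * 2 ^ (aP n * LP n)"
    using act_card[of "LP n"] LP_big by (simp only: mult_1)
  hence "card (act (LP n)) < 1" by (rule mult_less_cancel2[THEN iffD1, THEN conjunct2])
  hence "card (act (LP n)) = 0" by simp
  thus ?thesis using finite_subset[OF act_sub finV] by simp
qed

lemma LP_pos: "LP n \<ge> 1" unfolding LP_def by simp

definition layer :: "nat \<Rightarrow> nat" where "layer v = (LEAST r. v \<notin> act (Suc r))"

lemma layer_ex: "\<exists>r. v \<notin> act (Suc r)"
proof -
  have "v \<notin> act (Suc (LP n - 1))" using act_L LP_pos by simp
  thus ?thesis by blast
qed

lemma layer_lt: "layer v < LP n"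
proof -
  have "v \<notin> act (Suc (LP n - 1))" using act_L LP_pos by simp
  hence "layer v \<le> LP n - 1" unfolding layer_def by (rule Least_le)
  thus ?thesis using LP_pos by simp
qed

lemma act_iff: assumes "v \<in> V" shows "v \<in> act r \<longleftrightarrow> r \<le> layer v"
proof
  assume "v \<in> act r"
  show "r \<le> layer v"
  proof (rule ccontr)
    assume "\<not> r \<le> layer v"
    hence "act r \<subseteq> act (Suc (layer v))" by (intro act_anti) simp
    moreover have "v \<notin> act (Suc (layer v))" unfolding layer_def by (rule LeastI_ex[OF layer_ex])
    ultimately show False using \<open>v \<in> act r\<close> by blast
  qed
next
  assume "r \<le> layer v"
  show "v \<in> act r"
  proof (cases r)
    case 0 then show ?thesis using assms by simp
  next
    case (Suc r')
    hence "r' < layer v" using \<open>r \<le> layer v\<close> by simp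
    hence "\<not> (v \<notin> act (Suc r'))" unfolding layer_def by (rule not_less_Least)
    thus ?thesis using Suc by simp
  qed
qed

lemma lay_inv: "t \<le> LP n \<Longrightarrow> v \<in> V \<Longrightarrow> slay (S t v) = (if v \<in> act t then None else Some (layer v))"
proof (induction t arbitrary: v)
  case 0 then show ?case by (simp add: initS_def)
next
  case (Suc t)
  have IH: "\<And>u. u \<in> V \<Longrightarrow> slay (S t u) = (if u \<in> act t then None else Some (layer u))"
    using Suc by simp
  have cnt: "size (filter_mset (\<lambda>m. slay m = None) (msgs t v)) = degA E (act t) v"
  proof -
    have "{u\<in>N v. slay (S t u) = None} = {u\<in>act t. E v u}"
    proof -
      have "\<And>u. u \<in> V \<Longrightarrow> (slay (S t u) = None) = (u \<in> act t)" using IH by simp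
      thus ?thesis unfolding N_def using act_sub[of t] by blast
    qed
    thus ?thesis unfolding cnt_msgs degA_def by simp
  qed
  show ?case
  proof (cases "v \<in> act t")
    case True
    hence lt: "t \<le> layer v" using act_iff Suc by blast
    show ?thesis
    proof (cases "degA E (act t) v \<le> dP n")
      case True
      hence "v \<notin> act (Suc t)" by auto
      have "\<not> Suc t \<le> layer v" using act_iff[OF Suc(3), of "Suc t"] \<open>v \<notin> act (Suc t)\<close> by blast
      hence "layer v = t" using lt by simp
      then show ?thesis using True \<open>v \<in> act t\<close> IH[OF Suc(3)] cnt Suc(2) \<open>v \<notin> act (Suc t)\<close>
        by (simp add: S_Suc stepS_sel)
    next
      case False
      hence "v \<in> act (Suc t)" using \<open>v \<in> act t\<close> by auto
      then show ?thesis using False \<open>v \<in> act t\<close> IH[OF Suc(3)] cnt Suc(2)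
        by (simp add: S_Suc stepS_sel)
    qed
  next
    case False
    hence "v \<notin> act (Suc t)" by auto
    then show ?thesis using False IH[OF Suc(3)] by (simp add: S_Suc stepS_sel)
  qed
qed

lemma lay_final: assumes "LP n \<le> t" "v \<in> V" shows "slay (S t v) = Some (layer v)"
  using assms(1)
proof (induction t rule: dec_induct)
  case base then show ?case using lay_inv[of "LP n" v] assms(2) act_L by simp
next
  case (step t) then show ?case by (simp add: S_Suc stepS_sel)
qed

definition "Out v = {u\<in>N v. lexlt (layer v) (ident v) (layer u) (ident u)}"
definition "outsG v = sorted_list_of_set (ident ` Out v)"
definition "par v i = (SOME u. u \<in> Out v \<and> ident u = outsG v ! i)"
definition "c1G v = map (\<lambda>i. if i < length (outsG v) then cv (ident v) (outsG v ! i) else ident v mod 2) [0..<dP n]"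
definition "c2G v = map (\<lambda>i. if i < length (outsG v) then cv (c1G v ! i) (c1G (par v i) ! i) else c1G v ! i mod 2) [0..<dP n]"

lemma finOut: "finite (Out v)" unfolding Out_def using finN by simp

lemma set_outsG: "set (outsG v) = ident ` Out v"
  unfolding outsG_def using finOut by simp

lemma len_outsG: "v \<in> V \<Longrightarrow> length (outsG v) = card (Out v)"
  unfolding outsG_def using finOut inj
  by (simp add: card_image Out_def N_def inj_on_subset[of ident V])

lemma par: assumes "i < length (outsG v)" shows "par v i \<in> Out v" "ident (par v i) = outsG v ! i"
proof -
  have "outsG v ! i \<in> ident ` Out v" using assms set_outsG nth_mem by metis
  then have ex: "\<exists>u. u \<in> Out v \<and> ident u = outsG v ! i" by (metis imageE)
  show "par v i \<in> Out v" "ident (par v i) = outsG v ! i"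
    unfolding par_def using someI_ex[OF ex] by auto
qed

lemma Out_N: "Out v \<subseteq> N v" unfolding Out_def by auto

lemma souts_stable: assumes "LP n + 1 \<le> t" shows "souts (S t v) = souts (S (LP n + 1) v)"
  using assms by (induction t rule: dec_induct) (auto simp: S_Suc stepS_sel)
lemma sc1_stable: assumes "LP n + 2 \<le> t" shows "sc1 (S t v) = sc1 (S (LP n + 2) v)"
  using assms by (induction t rule: dec_induct) (auto simp: S_Suc stepS_sel)
lemma sc2_stable: assumes "LP n + 3 \<le> t" shows "sc2 (S t v) = sc2 (S (LP n + 3) v)"
  using assms by (induction t rule: dec_induct) (auto simp: S_Suc stepS_sel)

lemma outs_S: assumes "LP n + 1 \<le> t" "v \<in> V" shows "souts (S t v) = outsG v"
proof -
  have NV: "\<And>u. u \<in> N v \<Longrightarrow> u \<in> V" unfolding N_def by auto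
  have "{sid m | m. m \<in># msgs (LP n) v \<and> lexlt (the (slay (S (LP n) v))) (sid (S (LP n) v)) (the (slay m)) (sid m)}
      = ident ` Out v"
  proof (rule set_eqI)
    fix x
    show "x \<in> {sid m | m. m \<in># msgs (LP n) v \<and> lexlt (the (slay (S (LP n) v))) (sid (S (LP n) v)) (the (slay m)) (sid m)}
      \<longleftrightarrow> x \<in> ident ` Out v"
    proof
      assume "x \<in> {sid m | m. m \<in># msgs (LP n) v \<and> lexlt (the (slay (S (LP n) v))) (sid (S (LP n) v)) (the (slay m)) (sid m)}"
      then obtain u where "u \<in> N v" "x = ident u" "lexlt (layer v) (ident v) (layer u) (ident u)"
        unfolding set_msgs using lay_final[OF le_refl assms(2)] lay_final[OF le_refl NV] sid_S by auto
      then show "x \<in> ident ` Out v" unfolding Out_def by auto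
    next
      assume "x \<in> ident ` Out v"
      then obtain u where u: "u \<in> N v" "x = ident u" "lexlt (layer v) (ident v) (layer u) (ident u)"
        unfolding Out_def by auto
      have "S (LP n) u \<in># msgs (LP n) v" using u(1) set_msgs by auto
      moreover have "lexlt (the (slay (S (LP n) v))) (sid (S (LP n) v)) (the (slay (S (LP n) u))) (sid (S (LP n) u))"
        using u lay_final[OF le_refl assms(2)] lay_final[OF le_refl NV[OF u(1)]] sid_S by simp
      ultimately show "x \<in> {sid m | m. m \<in># msgs (LP n) v \<and> lexlt (the (slay (S (LP n) v))) (sid (S (LP n) v)) (the (slay m)) (sid m)}"
        using u(2) sid_S[of "LP n" u] by (intro CollectI exI[of _ "S (LP n) u"]) auto
    qed
  qed
  hence "souts (S (LP n + 1) v) = outsG v" unfolding outsG_def by (simp add: S_Suc stepS_sel)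
  thus ?thesis using souts_stable[OF assms(1)] by simp
qed

lemma c1_S: assumes "LP n + 2 \<le> t" "v \<in> V" shows "sc1 (S t v) = c1G v"
proof -
  have "sc1 (S (LP n + 2) v) = c1G v"
    using outs_S[OF le_refl assms(2)] by (simp add: S_Suc stepS_sel sid_S c1G_def numeral_2_eq_2)
  thus ?thesis using sc1_stable[OF assms(1)] by simp
qed

lemma c2_S: assumes "LP n + 3 \<le> t" "v \<in> V" shows "sc2 (S t v) = c2G v"
proof -
  have o: "souts (S (LP n + 2) v) = outsG v" using outs_S assms(2) by simp
  have l: "\<And>i. i < length (outsG v) \<Longrightarrow> sc1 (look (msgs (LP n + 2) v) (outsG v ! i)) ! i = c1G (par v i) ! i"
  proof -
    fix i assume i: "i < length (outsG v)"
    have "par v i \<in> N v" using par(1)[OF i] Out_N by auto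
    hence "look (msgs (LP n + 2) v) (outsG v ! i) = S (LP n + 2) (par v i)"
      using look_msgs par(2)[OF i] by metis
    moreover have "par v i \<in> V" using \<open>par v i \<in> N v\<close> unfolding N_def by auto
    ultimately show "sc1 (look (msgs (LP n + 2) v) (outsG v ! i)) ! i = c1G (par v i) ! i"
      using c1_S[OF le_refl] by simp
  qed
  have "sc2 (S (LP n + 3) v) = c2G v"
    using o l c1_S[OF le_refl assms(2)] unfolding c2G_def
    by (simp add: S_Suc[of "LP n + 2", simplified] stepS_sel numeral_3_eq_3 numeral_2_eq_2)
  thus ?thesis using sc2_stable[OF assms(1)] by simp
qed

end

lemma fl_bounds: assumes "n \<ge> 1" shows "real (floor_log n) \<le> log 2 (real n)" "log 2 (real n) - 1 < real (floor_log n)"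
proof -
  have pos: "real n > 0" using assms by simp
  have "2 ^ floor_log n \<le> n" using floor_log_exp2_le assms by simp
  hence "real (2 ^ floor_log n) \<le> real n" by linarith
  hence "(2::real) powr real (floor_log n) \<le> real n" by (simp add: powr_realpow)
  thus "real (floor_log n) \<le> log 2 (real n)" using pos by (simp add: le_log_iff)
  have "real n < real (2 * 2 ^ floor_log n)" using floor_log_exp2_gt[of n] by (simp only: of_nat_less_iff)
  also have "\<dots> = (2::real) powr (real (floor_log n) + 1)" by (simp add: powr_add powr_realpow)
  finally have "real n < (2::real) powr (real (floor_log n) + 1)" .
  hence "log 2 (real n) < real (floor_log n) + 1" using pos by (simp add: log_less_iff)
  thus "log 2 (real n) - 1 < real (floor_log n)" by simp
qed

definition RRb :: "nat \<Rightarrow> nat \<Rightarrow> real" where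
  "RRb c n = log 2 (real n) / ((log 2 (log 2 (real n)) - 3) / 2) + 4 +
     6 * sqrt (log 2 (real n)) * (2 * log 2 (2 * real c) + 2 + 2 * log 2 (log 2 (real n) + 1))"

lemma RRb_O: assumes "c \<ge> 1" shows "RRb c \<in> O(\<lambda>n. ln (real n) / ln (ln (real n)))"
proof -
  let ?g = "\<lambda>n::nat. ln (real n) / ln (ln (real n))"
  have 1: "(\<lambda>n::nat. log 2 (real n) / ((log 2 (log 2 (real n)) - 3) / 2)) \<in> O(?g)" by real_asymp
  have 2: "(\<lambda>n::nat. 4::real) \<in> O(?g)" by real_asymp
  have 3: "(\<lambda>n::nat. sqrt (log 2 (real n))) \<in> O(?g)" by real_asymp
  have 4: "(\<lambda>n::nat. sqrt (log 2 (real n)) * log 2 (log 2 (real n) + 1)) \<in> O(?g)" by real_asymp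
  have e: "RRb c = (\<lambda>n. log 2 (real n) / ((log 2 (log 2 (real n)) - 3) / 2) + 4 +
     (6 * (2 * log 2 (2 * real c) + 2)) * sqrt (log 2 (real n)) + 12 * (sqrt (log 2 (real n)) * log 2 (log 2 (real n) + 1)))"
    unfolding RRb_def by (rule ext) (simp add: algebra_simps)
  have 5: "(\<lambda>n::nat. (6 * (2 * log 2 (2 * real c) + 2)) * sqrt (log 2 (real n))) \<in> O(?g)"
    using 3 by simp
  have 6: "(\<lambda>n::nat. 12 * (sqrt (log 2 (real n)) * log 2 (log 2 (real n) + 1))) \<in> O(?g)"
    using 4 by simp
  show ?thesis unfolding e
    by (rule sum_in_bigo(1)[OF sum_in_bigo(1)[OF sum_in_bigo(1)[OF 1 2] 5] 6])
qed

lemma TP_bound: assumes c: "c \<ge> 1" and n: "n \<ge> 1024" shows "real (TP c n) \<le> RRb c n"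
proof -
  define L2 where "L2 = log 2 (real n)"
  define l where "l = floor_log n"
  define f where "f = floor_log l"
  define a where "a = aP n"
  have e10: "floor_log (1024::nat) = 10" using floor_log_power[of 10] by simp
  have e3: "floor_log (8::nat) = 3" using floor_log_power[of 3] by simp
  have l10: "l \<ge> 10" unfolding l_def using floor_log_le_iff[OF n] e10 by simp
  have lb: "real l \<le> L2" "L2 - 1 < real l" using fl_bounds[of n] n unfolding L2_def l_def by auto
  have L10: "L2 \<ge> 10" using lb l10 by linarith
  have f3: "f \<ge> 3" unfolding f_def using floor_log_le_iff[of 8 l] l10 e3 by simp
  have "f div 2 \<ge> 1" using f3 by simp
  hence aeq: "a = f div 2" unfolding a_def aP_def f_def l_def by simp
  have a1: "a \<ge> 1" using aeq f3 by simp
  have fb: "log 2 (real l) - 1 < real f" using fl_bounds[of l] l10 unfolding f_def by auto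
  have "L2 / 2 \<le> real l" using lb L10 by linarith
  hence "log 2 (L2 / 2) \<le> log 2 (real l)" using L10 by (subst log_le_cancel_iff) auto
  moreover have "log 2 (L2 / 2) = log 2 L2 - 1" using L10 by (simp add: log_divide)
  ultimately have f_lo: "real f > log 2 L2 - 2" using fb by linarith
  have "f \<le> 2 * a + 1" using aeq by simp
  hence fa: "real f \<le> 2 * real a + 1" by linarith
  define \<alpha> where "\<alpha> = (log 2 L2 - 3) / 2"
  have "log 2 L2 - 3 \<le> 2 * real a" using f_lo fa by linarith
  hence a_lo: "\<alpha> \<le> real a" unfolding \<alpha>_def by simp
  have "log 2 8 < log 2 L2" using L10 by (subst log_less_cancel_iff) auto
  moreover have "log 2 (8::real) = 3"
  proof -
    have "log 2 ((2::real) ^ 3) = real 3 * log 2 2" by (rule log_nat_power) simp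
    thus ?thesis by simp
  qed
  ultimately have al_pos: "\<alpha> > 0" unfolding \<alpha>_def by simp
  have "real (l div a) \<le> real l / real a" by (rule of_nat_div_le_of_nat)
  also have "\<dots> \<le> L2 / real a" using lb a1 by (intro divide_right_mono) auto
  also have "\<dots> \<le> L2 / \<alpha>" using a_lo al_pos L10 by (intro divide_left_mono) auto
  finally have LPb: "real (LP n) \<le> L2 / \<alpha> + 1" unfolding LP_def a_def[symmetric] l_def[symmetric] by simp
  have "2 ^ (a * 2) \<le> (2::nat) ^ f" using aeq by (intro power_increasing) auto
  also have "\<dots> \<le> l" unfolding f_def using floor_log_exp2_le l10 by simp
  finally have "real ((2::nat) ^ a) ^ 2 \<le> real l" by (simp add: power_mult[symmetric] mult.commute)
  hence "real ((2::nat) ^ a) ^ 2 \<le> L2" using lb by linarith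
  hence "real ((2::nat) ^ a) \<le> sqrt L2" by (rule real_le_rsqrt)
  hence dPb: "real (dP n) \<le> 2 * sqrt L2" unfolding dP_def a_def[symmetric] by simp
  have m1: "2 * (c * (l + 1)) \<ge> 1" using c by simp
  have "real (floor_log (2 * (c * (l + 1)))) \<le> log 2 (real (2 * (c * (l + 1))))"
    using fl_bounds(1)[OF m1] .
  also have "real (2 * (c * (l + 1))) = (2 * real c) * (real l + 1)" by (simp add: algebra_simps)
  also have "log 2 ((2 * real c) * (real l + 1)) = log 2 (2 * real c) + log 2 (real l + 1)"
    using c by (intro log_mult_pos) auto
  also have "\<dots> \<le> log 2 (2 * real c) + log 2 (L2 + 1)"
  proof -
    have "log 2 (real l + 1) \<le> log 2 (L2 + 1)" using lb L10 by (subst log_le_cancel_iff) auto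
    thus ?thesis by simp
  qed
  finally have CPb: "real (CP c n) \<le> 2 * log 2 (2 * real c) + 2 + 2 * log 2 (L2 + 1)"
    unfolding CP_def B1_def B0_def l_def[symmetric] by simp
  have "real (dP n) * real (CP c n) \<le> (2 * sqrt L2) * (2 * log 2 (2 * real c) + 2 + 2 * log 2 (L2 + 1))"
    using dPb CPb L10 by (intro mult_mono) auto
  hence "real (TP c n) \<le> (L2 / \<alpha> + 1) + 3 + 3 * ((2 * sqrt L2) * (2 * log 2 (2 * real c) + 2 + 2 * log 2 (L2 + 1)))"
    using LPb unfolding TP_def by simp
  thus ?thesis unfolding RRb_def L2_def[symmetric] \<alpha>_def by (simp add: algebra_simps)
qed

lemma TP_O: assumes c: "c \<ge> 1" shows "(\<lambda>n. real (TP c n)) \<in> O(\<lambda>n. ln (real n) / ln (ln (real n)))"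
proof -
  have "(\<lambda>n. real (TP c n)) \<in> O(RRb c)"
  proof (rule bigoI[of _ 1])
    show "\<forall>\<^sub>F x in at_top. norm (real (TP c x)) \<le> 1 * norm (RRb c x)"
      using TP_bound[OF c] by (intro eventually_at_top_linorderI[of 1024]) force
  qed
  thus ?thesis using RRb_O[OF c] landau_o.big_trans by blast
qed


context alg begin

lemma NV: "u \<in> N v \<Longrightarrow> u \<in> V \<and> E v u" unfolding N_def by auto

lemma outdeg: assumes "v \<in> V" shows "length (outsG v) \<le> dP n"
proof -
  have "Out v \<subseteq> {u\<in>act (layer v). E v u}"
  proof
    fix u assume "u \<in> Out v"
    hence u: "u \<in> V" "E v u" "layer v \<le> layer u" unfolding Out_def N_def lexlt_def by auto
    then show "u \<in> {u\<in>act (layer v). E v u}" using act_iff[OF u(1)] by auto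
  qed
  hence "card (Out v) \<le> degA E (act (layer v)) v" unfolding degA_def
    by (rule card_mono[rotated]) (use finite_subset[OF act_sub finV] in auto)
  moreover have a1: "v \<in> act (layer v)" using act_iff[OF assms, of "layer v"] by blast
  have a2: "v \<notin> act (Suc (layer v))" using act_iff[OF assms, of "Suc (layer v)"] by (simp del: act.simps)
  have "degA E (act (layer v)) v \<le> dP n"
  proof (rule ccontr)
    assume "\<not> ?thesis"
    hence "v \<in> act (Suc (layer v))" using a1 by simp
    with a2 show False by blast
  qed
  ultimately show ?thesis using len_outsG[OF assms] by simp
qed

lemma inj_ne: "E u v \<Longrightarrow> ident u \<noteq> ident v"
  using inj Ein Eirr unfolding inj_on_def by metis

lemma edge_cover: assumes "E a b" shows "b \<in> Out a \<or> a \<in> Out b"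
proof -
  have "ident a \<noteq> ident b" using inj_ne assms by blast
  hence "lexlt (layer a) (ident a) (layer b) (ident b) \<or> lexlt (layer b) (ident b) (layer a) (ident a)"
    unfolding lexlt_def by auto
  thus ?thesis unfolding Out_def N_def using assms Ein Esym by auto
qed

lemma par_E: "i < length (outsG v) \<Longrightarrow> E v (par v i) \<and> par v i \<in> V"
  using par(1) Out_N NV by blast

lemma c1_nth: "i < dP n \<Longrightarrow> c1G v ! i = (if i < length (outsG v) then cv (ident v) (outsG v ! i) else ident v mod 2)"
  unfolding c1G_def by simp
lemma c2_nth: "i < dP n \<Longrightarrow> c2G v ! i = (if i < length (outsG v) then cv (c1G v ! i) (c1G (par v i) ! i) else c1G v ! i mod 2)"
  unfolding c2G_def by simp

lemma c1_ne: assumes "v \<in> V" "i < length (outsG v)" shows "c1G v ! i \<noteq> c1G (par v i) ! i"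
proof -
  define p where "p = par v i"
  have id: "dP n > i" using outdeg[OF assms(1)] assms(2) by simp
  have pE: "E v p" "p \<in> V" using par_E[OF assms(2)] unfolding p_def by auto
  have ip: "ident p = outsG v ! i" using par(2)[OF assms(2)] unfolding p_def by simp
  have ne: "ident v \<noteq> ident p" using inj_ne pE by blast
  have cv1: "c1G v ! i = cv (ident v) (ident p)" using c1_nth[OF id, of v] assms(2) ip by simp
  have "c1G v ! i \<noteq> c1G p ! i"
  proof (cases "i < length (outsG p)")
    case True
    have ne2: "ident p \<noteq> ident (par p i)" using inj_ne par_E[OF True] by blast
    have "c1G p ! i = cv (ident p) (ident (par p i))" using c1_nth[OF id, of p] True par(2)[OF True] by simp
    then show ?thesis using cv1 cv_proper[OF ne ne2] by simp
  next
    case False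
    have "c1G p ! i = ident p mod 2" using c1_nth[OF id, of p] False by simp
    then show ?thesis using cv1 cv_root[OF ne] by simp
  qed
  thus ?thesis unfolding p_def .
qed

lemma c2_ne: assumes "v \<in> V" "i < length (outsG v)" shows "c2G v ! i \<noteq> c2G (par v i) ! i"
proof -
  define p where "p = par v i"
  have id: "dP n > i" using outdeg[OF assms(1)] assms(2) by simp
  have pE: "E v p" "p \<in> V" using par_E[OF assms(2)] unfolding p_def by auto
  have ne1: "c1G v ! i \<noteq> c1G p ! i" using c1_ne[OF assms] unfolding p_def .
  have cv2: "c2G v ! i = cv (c1G v ! i) (c1G p ! i)" using c2_nth[OF id, of v] assms(2) unfolding p_def by simp
  have "c2G v ! i \<noteq> c2G p ! i"
  proof (cases "i < length (outsG p)")
    case True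
    have ne2: "c1G p ! i \<noteq> c1G (par p i) ! i" using c1_ne[OF pE(2) True] .
    have "c2G p ! i = cv (c1G p ! i) (c1G (par p i) ! i)" using c2_nth[OF id, of p] True by simp
    then show ?thesis using cv2 cv_proper[OF ne1 ne2] by simp
  next
    case False
    have "c2G p ! i = c1G p ! i mod 2" using c2_nth[OF id, of p] False by simp
    then show ?thesis using cv2 cv_root[OF ne1] by simp
  qed
  thus ?thesis unfolding p_def .
qed

lemma B0_pos: "B0 c n \<ge> 1" unfolding B0_def using c1 by simp

lemma id_bound: assumes "v \<in> V" shows "ident v < 2 ^ B0 c n"
proof -
  have "n < 2 ^ (floor_log n + 1)" using floor_log_exp2_gt[of n] by simp
  hence "n ^ c < (2 ^ (floor_log n + 1)) ^ c" using c1 by (intro power_strict_mono) auto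
  also have "\<dots> = 2 ^ B0 c n" unfolding B0_def by (simp only: power_mult[symmetric] mult.commute)
  finally show ?thesis using idrange[OF assms] by simp
qed

lemma c1_bound: assumes "v \<in> V" "i < dP n" shows "c1G v ! i < 2 * B0 c n"
proof (cases "i < length (outsG v)")
  case True
  have "ident (par v i) = outsG v ! i" using par(2)[OF True] .
  moreover have "ident v \<noteq> ident (par v i)" using inj_ne par_E[OF True] by blast
  moreover have "ident (par v i) < 2 ^ B0 c n" using id_bound par_E[OF True] by blast
  ultimately have "cv (ident v) (ident (par v i)) < 2 * B0 c n" using cv_bound id_bound[OF assms(1)] by blast
  then show ?thesis using c1_nth[OF assms(2), of v] True par(2)[OF True] by simp
next
  case False
  then show ?thesis using c1_nth[OF assms(2)] B0_pos by simp
qed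

lemma B1_big: "2 * B0 c n \<le> 2 ^ B1 c n"
  unfolding B1_def using floor_log_exp2_gt[of "2 * B0 c n"] by simp

lemma c2_bound: assumes "v \<in> V" "i < dP n" shows "c2G v ! i < CP c n"
proof (cases "i < length (outsG v)")
  case True
  have pV: "par v i \<in> V" using par_E[OF True] by blast
  have "c1G v ! i < 2 ^ B1 c n" "c1G (par v i) ! i < 2 ^ B1 c n"
    using c1_bound[OF assms] c1_bound[OF pV assms(2)] B1_big by (meson order_less_le_trans)+
  then have "cv (c1G v ! i) (c1G (par v i) ! i) < 2 * B1 c n" using cv_bound c1_ne[OF assms(1) True] by blast
  then show ?thesis using c2_nth[OF assms(2), of v] True unfolding CP_def by simp
next
  case False
  then show ?thesis using c2_nth[OF assms(2)] unfolding CP_def B1_def by simp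
qed

end
context alg begin

abbreviation "P t v \<equiv> spart (S t v)"
abbreviation "Q t v \<equiv> sprop (S t v)"
abbreviation "KK \<equiv> dP n * CP c n"
definition "t0 k = LP n + 3 + 3 * k"

lemma part_mono1: "P t v = Some x \<Longrightarrow> P (Suc t) v = Some x"
  by (simp add: S_Suc stepS_sel)

lemma part_mono: "t \<le> t' \<Longrightarrow> P t v = Some x \<Longrightarrow> P t' v = Some x"
  by (induction t' rule: dec_induct) (auto intro: part_mono1)

lemma part_mono': "t \<le> t' \<Longrightarrow> P t v \<noteq> None \<Longrightarrow> P t' v \<noteq> None"
  using part_mono by blast

lemma pre_match: "t \<le> LP n + 3 \<Longrightarrow> P t v = None \<and> Q t v = None"
proof (induction t)
  case 0 then show ?case by (simp add: initS_def)
next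
  case (Suc t)
  hence "\<not> actv c n t" unfolding actv_def by simp
  with Suc show ?case by (simp add: S_Suc stepS_sel)
qed

lemma ph_facts: assumes "k < KK" "r < 3"
  shows "actv c n (t0 k + r)" "phs n (t0 k + r) = r" "lbl c n (t0 k + r) = k div CP c n"
    "col c n (t0 k + r) = k mod CP c n"
proof -
  have e: "t0 k + r - (LP n + 3) = 3 * k + r" unfolding t0_def by simp
  show "actv c n (t0 k + r)" using assms unfolding actv_def t0_def TP_def by simp
  show "phs n (t0 k + r) = r" unfolding phs_def e using assms(2) by simp
  show "lbl c n (t0 k + r) = k div CP c n" unfolding lbl_def e using assms(2) by simp
  show "col c n (t0 k + r) = k mod CP c n" unfolding col_def e using assms(2) by simp
qed

lemma msg_ex: "(\<exists>m\<in>#msgs t v. R m) \<longleftrightarrow> (\<exists>u\<in>N v. R (S t u))"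
  using set_msgs by auto

lemma msg_set: "{sid m | m. m \<in># msgs t v \<and> R m} = ident ` {u\<in>N v. R (S t u)}"
proof (rule set_eqI, rule iffI)
  fix x assume "x \<in> {sid m | m. m \<in># msgs t v \<and> R m}"
  then show "x \<in> ident ` {u\<in>N v. R (S t u)}" using set_msgs sid_S by auto
next
  fix x assume "x \<in> ident ` {u\<in>N v. R (S t u)}"
  then obtain u where u: "u \<in> N v" "R (S t u)" "x = ident u" by auto
  have "S t u \<in># msgs t v" using u(1) set_msgs by auto
  then show "x \<in> {sid m | m. m \<in># msgs t v \<and> R m}"
    using u sid_S[of t u] by (intro CollectI exI[of _ "S t u"]) auto
qed

definition "qv k v \<longleftrightarrow> P (t0 k) v = None \<and> k div CP c n < length (outsG v) \<and> c2G v ! (k div CP c n) = k mod CP c n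
   \<and> P (t0 k) (par v (k div CP c n)) = None"

lemma t0_ge: "LP n + 3 \<le> t0 k" unfolding t0_def by simp

lemma F1: assumes "k < KK" "v \<in> V"
  shows "Q (Suc (t0 k)) v = (if qv k v then Some (ident (par v (k div CP c n))) else None)"
proof -
  define i0 where "i0 = k div CP c n"
  have ph: "actv c n (t0 k)" "phs n (t0 k) = 0" "lbl c n (t0 k) = i0" "col c n (t0 k) = k mod CP c n"
    using ph_facts[OF assms(1), of 0] unfolding i0_def by auto
  have "LP n + 1 \<le> t0 k" using t0_ge[of k] by simp
  hence o: "souts (S (t0 k) v) = outsG v" using outs_S[OF _ assms(2)] by blast
  have c2: "sc2 (S (t0 k) v) = c2G v" using c2_S[OF t0_ge assms(2)] .
  show ?thesis
  proof (cases "i0 < length (outsG v)")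
    case True
    have "par v i0 \<in> N v" using par(1)[OF True] Out_N by auto
    hence lk: "look (msgs (t0 k) v) (outsG v ! i0) = S (t0 k) (par v i0)"
      using look_msgs par(2)[OF True] by metis
    show ?thesis unfolding qv_def i0_def[symmetric]
      using True ph o c2 lk par(2)[OF True] by (simp add: S_Suc stepS_sel)
  next
    case False
    show ?thesis unfolding qv_def i0_def[symmetric]
      using False ph o c2 by (simp add: S_Suc stepS_sel)
  qed
qed

lemma F2: assumes "k < KK" shows "P (Suc (t0 k)) v = P (t0 k) v"
  using ph_facts[OF assms(1), of 0] by (simp add: S_Suc stepS_sel)

lemma F3: assumes "k < KK" shows "Q (Suc (Suc (t0 k))) v = Q (Suc (t0 k)) v"
  using ph_facts[OF assms(1), of 1] by (simp add: S_Suc stepS_sel)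

definition "RR k v = {u\<in>N v. Q (Suc (t0 k)) u = Some (ident v)}"

lemma F4: assumes "k < KK"
  shows "P (Suc (Suc (t0 k))) v = (if P (t0 k) v = None \<and> Q (Suc (t0 k)) v = None \<and> RR k v \<noteq> {}
     then Some (Min (ident ` RR k v)) else P (t0 k) v)"
proof -
  have ph: "actv c n (Suc (t0 k))" "phs n (Suc (t0 k)) = 1"
    using ph_facts[OF assms(1), of 1] by auto
  have e1: "(\<exists>m\<in>#msgs (Suc (t0 k)) v. sprop m = Some (sid (S (Suc (t0 k)) v))) \<longleftrightarrow> RR k v \<noteq> {}"
    unfolding msg_ex RR_def sid_S by auto
  have e2: "{sid m | m. m \<in># msgs (Suc (t0 k)) v \<and> sprop m = Some (sid (S (Suc (t0 k)) v))} = ident ` RR k v"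
    unfolding sid_S msg_set RR_def by simp
  show ?thesis using ph e1 e2 F2[OF assms] by (simp add: S_Suc[of "Suc (t0 k)"] stepS_sel)
qed

lemma F5: assumes "k < KK" "v \<in> V"
  shows "P (Suc (Suc (Suc (t0 k)))) v = (if P (Suc (Suc (t0 k))) v = None \<and> qv k v
     \<and> P (Suc (Suc (t0 k))) (par v (k div CP c n)) = Some (ident v)
     then Some (ident (par v (k div CP c n))) else P (Suc (Suc (t0 k))) v)"
proof -
  define i0 where "i0 = k div CP c n"
  have ph: "actv c n (Suc (Suc (t0 k)))" "phs n (Suc (Suc (t0 k))) = 2"
    using ph_facts[OF assms(1), of 2] by (auto simp: numeral_2_eq_2)
  have q: "Q (Suc (Suc (t0 k))) v = (if qv k v then Some (ident (par v i0)) else None)"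
    using F3[OF assms(1)] F1[OF assms] unfolding i0_def by simp
  show ?thesis
  proof (cases "qv k v")
    case True
    hence T: "i0 < length (outsG v)" unfolding qv_def i0_def by simp
    have "par v i0 \<in> N v" using par(1)[OF T] Out_N by auto
    hence lk: "look (msgs (Suc (Suc (t0 k))) v) (ident (par v i0)) = S (Suc (Suc (t0 k))) (par v i0)"
      using look_msgs by metis
    show ?thesis using True ph q lk unfolding i0_def[symmetric]
      by (simp add: S_Suc[of "Suc (Suc (t0 k))"] stepS_sel sid_S)
  next
    case False
    show ?thesis using False ph q unfolding i0_def[symmetric]
      by (simp add: S_Suc[of "Suc (Suc (t0 k))"] stepS_sel)
  qed
qed

lemma F6: assumes "k < KK" shows "Q (Suc (Suc (Suc (t0 k)))) v = None"
  using ph_facts[OF assms(1), of 2] by (simp add: S_Suc[of "Suc (Suc (t0 k))"] stepS_sel numeral_2_eq_2)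

lemma t0_Suc: "t0 (Suc k) = Suc (Suc (Suc (t0 k)))" unfolding t0_def by simp

definition "Inv k \<longleftrightarrow> (\<forall>v\<in>V. Q (t0 k) v = None) \<and>
  (\<forall>v\<in>V. \<forall>x. P (t0 k) v = Some x \<longrightarrow> (\<exists>u. E v u \<and> x = ident u \<and> P (t0 k) u = Some (ident v))) \<and>
  (\<forall>v\<in>V. \<forall>i < length (outsG v). i * CP c n + c2G v ! i < k \<longrightarrow> P (t0 k) v \<noteq> None \<or> P (t0 k) (par v i) \<noteq> None)"

lemma Inv0: "Inv 0"
  unfolding Inv_def using pre_match[of "t0 0"] unfolding t0_def by auto

lemma K1: assumes "k < KK" "u \<in> V" "v \<in> V" "Q (Suc (t0 k)) u = Some (ident v)"
  shows "qv k u" "par u (k div CP c n) = v"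
proof -
  show q: "qv k u" using F1[OF assms(1,2)] assms(4) by (auto split: if_splits)
  hence "k div CP c n < length (outsG u)" unfolding qv_def by simp
  hence "par u (k div CP c n) \<in> V" using par_E by blast
  moreover have "ident (par u (k div CP c n)) = ident v" using F1[OF assms(1,2)] assms(4) q by simp
  ultimately show "par u (k div CP c n) = v" using inj assms(3) unfolding inj_on_def by blast
qed

lemma RR_sub: "RR k v \<subseteq> N v" unfolding RR_def by auto
lemma finRR: "finite (RR k v)" using finite_subset[OF RR_sub finN] .

lemma Inv_step: assumes k: "k < KK" and I: "Inv k" shows "Inv (Suc k)"
proof -
  define t where "t = t0 k"
  define i0 where "i0 = k div CP c n"
  define j0 where "j0 = k mod CP c n"
  have I1: "\<And>v. v \<in> V \<Longrightarrow> Q t v = None" using I unfolding Inv_def t_def by blast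
  have I2: "\<And>v x. v \<in> V \<Longrightarrow> P t v = Some x \<Longrightarrow> \<exists>u. E v u \<and> x = ident u \<and> P t u = Some (ident v)"
    using I unfolding Inv_def t_def by blast
  have I3: "\<And>v i. v \<in> V \<Longrightarrow> i < length (outsG v) \<Longrightarrow> i * CP c n + c2G v ! i < k \<Longrightarrow> P t v \<noteq> None \<or> P t (par v i) \<noteq> None"
    using I unfolding Inv_def t_def by blast
  note F1' = F1[OF k, folded t_def i0_def]
  note F2' = F2[OF k, folded t_def]
  note F4' = F4[OF k, folded t_def]
  note F5' = F5[OF k, folded t_def i0_def]
  note K1' = K1[OF k, folded t_def i0_def]
  have qvD: "\<And>v. qv k v \<Longrightarrow> P t v = None \<and> i0 < length (outsG v) \<and> c2G v ! i0 = j0 \<and> P t (par v i0) = None"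
    unfolding qv_def t_def i0_def j0_def by simp
  have le3: "t \<le> Suc (Suc (Suc t))" "Suc (Suc t) \<le> Suc (Suc (Suc t))" by auto
  have B: "\<exists>u. E v u \<and> x = ident u \<and> P (Suc (Suc (Suc t))) u = Some (ident v)"
    if v: "v \<in> V" and px: "P (Suc (Suc (Suc t))) v = Some x" for v x
  proof (cases "P t v")
    case (Some y)
    hence "P (Suc (Suc (Suc t))) v = Some y" using part_mono[OF le3(1)] by blast
    hence "y = x" using px by simp
    then obtain u where "E v u" "x = ident u" "P t u = Some (ident v)" using I2[OF v Some] by blast
    then show ?thesis using part_mono[OF le3(1)] by blast
  next
    case None
    show ?thesis
    proof (cases "P (Suc (Suc t)) v")
      case (Some y)
      hence "P (Suc (Suc (Suc t))) v = Some y" using part_mono[OF le3(2)] by blast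
      hence "y = x" using px by simp
      from Some F4'[of v] None have c: "Q (Suc t) v = None" "RR k v \<noteq> {}" "x = Min (ident ` RR k v)"
        using \<open>y = x\<close> by (auto split: if_splits)
      have "Min (ident ` RR k v) \<in> ident ` RR k v" using c(2) finRR by (intro Min_in) auto
      then obtain u0 where u0: "u0 \<in> RR k v" "x = ident u0" using c(3) by auto
      have u0N: "u0 \<in> N v" "Q (Suc t) u0 = Some (ident v)" using u0 unfolding RR_def t_def by auto
      have u0V: "u0 \<in> V" "E v u0" using NV[OF u0N(1)] by auto
      have q: "qv k u0" "par u0 i0 = v" using K1'[OF u0V(1) v u0N(2)] by auto
      have "P t u0 = None" using qvD[OF q(1)] by simp
      hence "P (Suc (Suc t)) u0 = None" using F4'[of u0] u0N(2) by simp
      hence "P (Suc (Suc (Suc t))) u0 = Some (ident v)"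
        using F5'[OF u0V(1)] q Some \<open>y = x\<close> u0(2) by simp
      then show ?thesis using u0V u0(2) by blast
    next
      case None2: None
      have c: "qv k v" "P (Suc (Suc t)) (par v i0) = Some (ident v)" "x = ident (par v i0)"
        using F5'[OF v] None2 px by (auto split: if_splits)
      have T: "i0 < length (outsG v)" using qvD[OF c(1)] by simp
      have "P (Suc (Suc (Suc t))) (par v i0) = Some (ident v)" using part_mono[OF le3(2) c(2)] .
      then show ?thesis using par_E[OF T] c(3) by blast
    qed
  qed
  have C: "P (Suc (Suc (Suc t))) v \<noteq> None \<or> P (Suc (Suc (Suc t))) (par v i) \<noteq> None"
    if v: "v \<in> V" and i: "i < length (outsG v)" and lt: "i * CP c n + c2G v ! i < Suc k" for v i
  proof (cases "i * CP c n + c2G v ! i < k")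
    case True
    then show ?thesis using I3[OF v i True] part_mono'[OF le3(1)] by blast
  next
    case False
    hence eq: "i * CP c n + c2G v ! i = k" using lt by simp
    have bnd: "c2G v ! i < CP c n" using c2_bound[OF v] outdeg[OF v] i by simp
    have ii: "i = i0" "c2G v ! i = j0" unfolding i0_def j0_def using eq bnd by auto
    define p where "p = par v i0"
    have pV: "p \<in> V" "E v p" using par_E i ii unfolding p_def by auto
    show ?thesis
    proof (cases "P t v = None \<and> P t p = None")
      case False
      then show ?thesis using part_mono'[OF le3(1)] ii unfolding p_def by blast
    next
      case True
      have "qv k v" unfolding qv_def using True i ii unfolding p_def t_def i0_def j0_def by simp
      hence qv1: "Q (Suc t) v = Some (ident p)" using F1'[OF v] unfolding p_def by simp
      have "i0 < length (outsG v)" using i ii by simp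
      hence "c2G v ! i0 \<noteq> c2G p ! i0" using c2_ne[OF v] unfolding p_def by blast
      hence "\<not> qv k p" using qvD ii by auto
      hence qp: "Q (Suc t) p = None" using F1'[OF pV(1)] by simp
      have "v \<in> RR k p" unfolding RR_def N_def using qv1 pV Esym Ein unfolding t_def by auto
      hence "P (Suc (Suc t)) p \<noteq> None" using F4'[of p] True qp by auto
      then show ?thesis using part_mono'[OF le3(2)] ii unfolding p_def by blast
    qed
  qed
  show ?thesis unfolding Inv_def t0_Suc t_def[symmetric]
    using F6[OF k, folded t_def] B C by blast
qed

lemma Inv_all: "k \<le> KK \<Longrightarrow> Inv k"
  by (induction k) (auto simp: Inv0 intro: Inv_step)

end
context alg begin

lemma TP_t0: "TP c n = t0 KK" unfolding TP_def t0_def by simp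

lemma final_cons: assumes "v \<in> V" "P (TP c n) v = Some x"
  shows "\<exists>u. E v u \<and> x = ident u \<and> P (TP c n) u = Some (ident v)"
  using Inv_all[OF le_refl] assms unfolding Inv_def TP_t0 by blast

lemma final_cover: assumes "E a b" shows "P (TP c n) a \<noteq> None \<or> P (TP c n) b \<noteq> None"
proof -
  have gen: "P (TP c n) v \<noteq> None \<or> P (TP c n) u \<noteq> None" if "u \<in> Out v" "v \<in> V" for u v
  proof -
    have "ident u \<in> set (outsG v)" using that set_outsG by auto
    then obtain i where i: "i < length (outsG v)" "outsG v ! i = ident u" by (auto simp: in_set_conv_nth)
    have "par v i \<in> V" using par_E[OF i(1)] by blast
    moreover have "u \<in> V" using that Out_N NV by blast
    moreover have "ident (par v i) = ident u" using par(2)[OF i(1)] i(2) by simp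
    ultimately have pu: "par v i = u" using inj unfolding inj_on_def by blast
    have "c2G v ! i < CP c n" using c2_bound[OF that(2)] outdeg[OF that(2)] i by simp
    moreover have "i < dP n" using outdeg[OF that(2)] i by simp
    ultimately have "i * CP c n + c2G v ! i < KK"
    proof -
      assume a: "c2G v ! i < CP c n" "i < dP n"
      have "i * CP c n + c2G v ! i < Suc i * CP c n" using a(1) by simp
      also have "\<dots> \<le> dP n * CP c n" using a(2) by (intro mult_le_mono1) simp
      finally show ?thesis .
    qed
    thus ?thesis using Inv_all[OF le_refl] i that(2) pu unfolding Inv_def TP_t0 by blast
  qed
  show ?thesis using edge_cover[OF assms] gen Ein[OF assms] by blast
qed

lemma final_solves: "solves_maximal_matching V E ident (\<lambda>v. P (TP c n) v)"
proof -
  let ?o = "\<lambda>v. P (TP c n) v"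
  let ?M = "{{u, v} | u v. E u v \<and> ?o u = Some (ident v)}"
  have sym: "?o v = Some (ident u)" if h1: "E u v" and h2: "?o u = Some (ident v)" for u v
  proof -
    obtain w where w: "E u w" "ident v = ident w" "?o w = Some (ident u)"
      using final_cons[OF _ h2] Ein[OF h1] by blast
    have "v = w" using inj_onD[OF inj w(2)] Ein[OF h1] Ein[OF w(1)] by blast
    thus ?thesis using w by simp
  qed
  have uniq: "y = y'" if "?o z = Some (ident y)" "?o z = Some (ident y')" "y \<in> V" "y' \<in> V" for z y y'
    using that inj unfolding inj_on_def by auto
  have part1: "\<forall>v\<in>V. ?o v = None \<or> (\<exists>u. E v u \<and> ?o v = Some (ident u) \<and> ?o u = Some (ident v))"
  proof
    fix v assume v: "v \<in> V"
    show "?o v = None \<or> (\<exists>u. E v u \<and> ?o v = Some (ident u) \<and> ?o u = Some (ident v))"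
    proof (cases "?o v")
      case (Some x)
      then obtain u where "E v u" "x = ident u" "?o u = Some (ident v)" using final_cons[OF v] by blast
      then show ?thesis using Some by blast
    qed simp
  qed
  have sub: "?M \<subseteq> graph_edges E" unfolding graph_edges_def by blast
  have disj: "\<forall>e\<in>?M. \<forall>e'\<in>?M. e \<noteq> e' \<longrightarrow> e \<inter> e' = {}"
  proof (intro ballI impI)
    fix e e' assume e: "e \<in> ?M" and e': "e' \<in> ?M" and ne: "e \<noteq> e'"
    obtain u v where uv: "e = {u, v}" "E u v" "?o u = Some (ident v)" using e by blast
    obtain u' v' where uv': "e' = {u', v'}" "E u' v'" "?o u' = Some (ident v')" using e' by blast
    have s1: "?o v = Some (ident u)" using sym uv by blast
    have s2: "?o v' = Some (ident u')" using sym uv' by blast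
    have V: "u \<in> V" "v \<in> V" "u' \<in> V" "v' \<in> V" using Ein uv(2) uv'(2) by auto
    show "e \<inter> e' = {}"
    proof (rule ccontr)
      assume "e \<inter> e' \<noteq> {}"
      then obtain z where "z \<in> e" "z \<in> e'" by blast
      have oth: "\<exists>w. w \<in> V \<and> ?o z = Some (ident w) \<and> f = {z, w}"
        if "z \<in> f" "f = {a, b}" "?o a = Some (ident b)" "?o b = Some (ident a)" "a \<in> V" "b \<in> V" for f a b
      proof (cases "z = a")
        case True then show ?thesis using that by blast
      next
        case False
        hence "z = b" using that by blast
        then show ?thesis using that by (intro exI[of _ a]) (auto simp: insert_commute)
      qed
      obtain w where w: "w \<in> V" "?o z = Some (ident w)" "e = {z, w}"
        using oth[OF \<open>z \<in> e\<close> uv(1) uv(3) s1 V(1,2)] by blast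
      obtain w' where w': "w' \<in> V" "?o z = Some (ident w')" "e' = {z, w'}"
        using oth[OF \<open>z \<in> e'\<close> uv'(1) uv'(3) s2 V(3,4)] by blast
      have "w = w'" using uniq[OF w(2) w'(2) w(1) w'(1)] .
      then have "e = e'" using w(3) w'(3) by simp
      with ne show False by simp
    qed
  qed
  have maxi: "\<forall>e\<in>graph_edges E. \<exists>e'\<in>?M. e \<inter> e' \<noteq> {}"
  proof
    fix e assume "e \<in> graph_edges E"
    then obtain a b where ab: "e = {a, b}" "E a b" unfolding graph_edges_def by blast
    have m: "\<exists>e'\<in>?M. x \<in> e'" if h1: "x \<in> V" and h2: "?o x \<noteq> None" for x
    proof -
      obtain y where "?o x = Some y" using h2 by auto
      then obtain u where "E x u" "y = ident u" "?o u = Some (ident x)" using final_cons[OF h1 \<open>?o x = Some y\<close>] by blast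
      hence "{x, u} \<in> ?M" using \<open>?o x = Some y\<close> by (intro CollectI exI[of _ x] exI[of _ u]) simp
      thus ?thesis by (intro bexI[of _ "{x, u}"]) simp_all
    qed
    have "\<exists>e'\<in>?M. a \<in> e' \<or> b \<in> e'"
    proof (cases "?o a \<noteq> None")
      case True
      obtain e' where "e' \<in> ?M" "a \<in> e'" using m[OF conjunct1[OF Ein[OF ab(2)]] True] by blast
      then show ?thesis by (intro bexI[of _ e']) simp_all
    next
      case False
      hence "?o b \<noteq> None" using final_cover[OF ab(2)] by auto
      then obtain e' where "e' \<in> ?M" "b \<in> e'" using m[OF conjunct2[OF Ein[OF ab(2)]]] by blast
      then show ?thesis by (intro bexI[of _ e']) simp_all
    qed
    then obtain e' where "e' \<in> ?M" "a \<in> e' \<or> b \<in> e'" by blast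
    then show "\<exists>e'\<in>?M. e \<inter> e' \<noteq> {}" using ab(1) by (intro bexI[of _ e']) auto
  qed
  show ?thesis unfolding solves_maximal_matching_def is_maximal_matching_def is_matching_def
    using part1 sub disj maxi by (intro conjI) assumption+
qed

end

theorem mainTheorem4:
  fixes c :: nat
  assumes "c \<ge> 1"
  shows "\<exists>T :: nat \<Rightarrow> nat.
    (\<lambda>n. real (T n)) \<in> O(\<lambda>n. ln (real n) / ln (ln (real n))) \<and>
    (\<exists>(init :: nat \<Rightarrow> nat \<Rightarrow> nat) (step :: nat \<Rightarrow> nat \<Rightarrow> nat \<Rightarrow> nat multiset \<Rightarrow> nat)
        (out :: nat \<Rightarrow> nat \<Rightarrow> nat option).
      \<forall>V E ident. is_tree V E \<and> valid_ids c V ident \<longrightarrow>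
        solves_maximal_matching V E ident
          (\<lambda>v. out (card V) (local_state init step V E ident (T (card V)) v)))"
proof (intro exI conjI)
  show "(\<lambda>n. real (TP c n)) \<in> O(\<lambda>n. ln (real n) / ln (ln (real n)))" using TP_O[OF assms] .
  show "\<forall>V E ident. is_tree V E \<and> valid_ids c V ident \<longrightarrow>
        solves_maximal_matching V E ident
          (\<lambda>v. (\<lambda>n s. spart (from_nat s :: st)) (card V)
             (local_state (\<lambda>n x. to_nat (initS n x))
                (\<lambda>n t s M. to_nat (stepS c n t (from_nat s) (image_mset from_nat M))) V E ident (TP c (card V)) v))"
  proof (intro allI impI)
    fix V E ident assume h: "is_tree V E \<and> valid_ids c V ident"
    interpret alg V E ident c using h assms by unfold_locales auto
    have "(\<lambda>v. (\<lambda>n s. spart (from_nat s :: st)) (card V)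
             (local_state (\<lambda>n x. to_nat (initS n x))
                (\<lambda>n t s M. to_nat (stepS c n t (from_nat s) (image_mset from_nat M))) V E ident (TP c (card V)) v))
        = (\<lambda>v. P (TP c (card V)) v)"
      by (rule ext) (simp only: sim from_nat_to_nat)
    then show "solves_maximal_matching V E ident
          (\<lambda>v. (\<lambda>n s. spart (from_nat s :: st)) (card V)
             (local_state (\<lambda>n x. to_nat (initS n x))
                (\<lambda>n t s M. to_nat (stepS c n t (from_nat s) (image_mset from_nat M))) V E ident (TP c (card V)) v))"
      using final_solves by simp
  qed
qed

end
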